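(* Let $L$ be a primitive $\mathbb{Z}_2$-lattice of rank at least $4$. If $L$ is of type A, then $B(\mathbf x,\mathbf y)\in 2^{\nu_2(L)-2}\mathbb{Z}_2$ for all $\mathbf x,\mathbf y\in L$ with $\mathrm{ord}_2(Q(\mathbf x))=\mathrm{ord}_2(Q(\mathbf y))=\nu_2(L)$.
   Context: A $\mathbb{Z}_2$-lattice is a free $\mathbb{Z}_2$-module of finite rank with a non-degenerate symmetric bilinear form $B$ with values in $\mathbb{Z}_2$; $Q(\mathbf x)=B(\mathbf x,\mathbf x)$. Scale $\mathfrak sL$ = ideal generated by all $B(\mathbf x,\mathbf y)$; norm $\mathfrak nL$ = ideal generated by all $Q(\mathbf x)$; primitive means $\mathfrak sL=\mathbb{Z}_2$. Let $SC_2=\{1,3,5,7,2,6,10,14\}$. For $L$ of rank $\ge4$ and $s\in SC_2$, let $u\ge0$ be least with $s4^u=Q(\mathbf x)$ for some $\mathbf x\in L$; $\nu_{2,s}(L)=\mathrm{ord}_2(s4^u)$; $\nu_2(L)=\max_s\nu_{2,s}(L)$. A primitive $\mathbb{Z}_2$-lattice $L$ of rank $\ge4$ is of type A if there is a Jordan decomposition $L=\ell_1\perp\cdots\perp\ell_k$ with $\mathbb{Z}_2=\mathfrak s(\ell_1)\supsetneq\cdots\supsetneq\mathfrak s(\ell_k)$ and a positive integer $t$ such that $\ell_1\perp\cdots\perp\ell_{t-1}$ is an anisotropic ternary $\mathbb{Z}_2$-lattice and $\mathfrak n\ell_t\subseteq 8\,\mathfrak s\ell_{t-1}$. *)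

theory Defs
  imports "Jordan_Normal_Form.Determinant" "HOL-Library.Extended_Nat"
begin

text \<open>A 2-adic integer is a compatible sequence of residues: the k-th entry is
  its residue modulo 2^k, taken in the range 0..2^k-1.\<close>

typedef z2 = "{f :: nat \<Rightarrow> int. \<forall>k. f k = f (Suc k) mod 2 ^ k}"
  morphisms digits Abs_z2
  by (rule exI[of _ "\<lambda>_. 0"]) simp

setup_lifting type_definition_z2

lemma z2_mod_step: "(x::int) mod 2 ^ Suc k mod 2 ^ k = x mod 2 ^ k"
proof -
  have "(2::int) ^ k dvd 2 ^ Suc k" by (simp add: le_imp_power_dvd)
  then show ?thesis by (rule mod_mod_cancel)
qed

lemma compat_plus:
  fixes f g :: "nat \<Rightarrow> int"
  assumes "\<forall>k. f k = f (Suc k) mod 2 ^ k" "\<forall>k. g k = g (Suc k) mod 2 ^ k"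
  shows "(f k + g k) mod 2 ^ k = (f (Suc k) + g (Suc k)) mod 2 ^ Suc k mod 2 ^ k"
  unfolding z2_mod_step using assms by (metis mod_add_eq)
lemma compat_times:
  fixes f g :: "nat \<Rightarrow> int"
  assumes "\<forall>k. f k = f (Suc k) mod 2 ^ k" "\<forall>k. g k = g (Suc k) mod 2 ^ k"
  shows "(f k * g k) mod 2 ^ k = (f (Suc k) * g (Suc k)) mod 2 ^ Suc k mod 2 ^ k"
  unfolding z2_mod_step using assms by (metis mod_mult_eq)
lemma compat_uminus:
  fixes f :: "nat \<Rightarrow> int"
  assumes "\<forall>k. f k = f (Suc k) mod 2 ^ k"
  shows "(- f k) mod 2 ^ k = (- f (Suc k)) mod 2 ^ Suc k mod 2 ^ k"
  unfolding z2_mod_step using assms by (metis mod_minus_eq)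

instantiation z2 :: comm_ring_1
begin

lift_definition zero_z2 :: z2 is "\<lambda>_. 0" by simp
lift_definition one_z2 :: z2 is "\<lambda>k. 1 mod 2 ^ k"
  by (metis z2_mod_step)
lift_definition plus_z2 :: "z2 \<Rightarrow> z2 \<Rightarrow> z2" is "\<lambda>f g k. (f k + g k) mod 2 ^ k"
  by (rule compat_plus) blast+
lift_definition times_z2 :: "z2 \<Rightarrow> z2 \<Rightarrow> z2" is "\<lambda>f g k. (f k * g k) mod 2 ^ k"
  by (rule compat_times) blast+
lift_definition uminus_z2 :: "z2 \<Rightarrow> z2" is "\<lambda>f k. (- f k) mod 2 ^ k"
  by (rule compat_uminus) blast
definition minus_z2 :: "z2 \<Rightarrow> z2 \<Rightarrow> z2" where "minus_z2 a b = a + - b"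

lemma digits_mod: "digits a k mod 2 ^ k = digits a k"
proof -
  have "digits a k = digits a (Suc k) mod 2 ^ k" using digits[of a] by blast
  then show ?thesis by (metis mod_mod_trivial)
qed

lemma digits_0: "digits a 0 = 0"
  using digits_mod[of a 0] by simp

lemma z2_eqI: "(\<And>k. digits a k = digits b k) \<Longrightarrow> a = b"
  by (simp add: digits_inject[symmetric] fun_eq_iff)

lemma z2_add_assoc: "(a::z2) + b + c = a + (b + c)"
  by (rule z2_eqI) (simp add: plus_z2.rep_eq mod_add_left_eq mod_add_right_eq add.assoc)
lemma z2_add_comm: "(a::z2) + b = b + a"
  by (rule z2_eqI) (simp add: plus_z2.rep_eq add.commute)
lemma z2_add_0: "0 + (a::z2) = a"
  by (rule z2_eqI) (simp add: plus_z2.rep_eq zero_z2.rep_eq digits_mod)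
lemma z2_neg: "- (a::z2) + a = 0"
  by (rule z2_eqI) (simp add: plus_z2.rep_eq zero_z2.rep_eq uminus_z2.rep_eq mod_add_left_eq)
lemma z2_mult_assoc: "(a::z2) * b * c = a * (b * c)"
  by (rule z2_eqI) (simp add: times_z2.rep_eq mod_mult_left_eq mod_mult_right_eq mult.assoc)
lemma z2_mult_comm: "(a::z2) * b = b * a"
  by (rule z2_eqI) (simp add: times_z2.rep_eq mult.commute)
lemma z2_mult_1: "1 * (a::z2) = a"
  by (rule z2_eqI) (simp add: times_z2.rep_eq one_z2.rep_eq mod_mult_left_eq digits_mod digits_0)
lemma z2_distrib: "((a::z2) + b) * c = a * c + b * c"
proof (rule z2_eqI)
  fix k
  have "((digits a k + digits b k) mod 2 ^ k * digits c k) mod 2 ^ k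
      = (digits a k * digits c k + digits b k * digits c k) mod 2 ^ k"
    by (simp add: mod_mult_left_eq distrib_right)
  also have "\<dots> = ((digits a k * digits c k) mod 2 ^ k + (digits b k * digits c k) mod 2 ^ k) mod 2 ^ k"
    by (rule mod_add_eq[symmetric])
  finally show "digits ((a + b) * c) k = digits (a * c + b * c) k"
    unfolding times_z2.rep_eq plus_z2.rep_eq .
qed
lemma z2_01: "(0::z2) \<noteq> 1"
proof
  assume "(0::z2) = 1"
  then have "digits (0::z2) 1 = digits 1 1" by simp
  then show False by (simp add: zero_z2.rep_eq one_z2.rep_eq)
qed

instance
proof
  fix a b c :: z2
  show "a + b + c = a + (b + c)" by (rule z2_add_assoc)
  show "a + b = b + a" by (rule z2_add_comm)
  show "0 + a = a" by (rule z2_add_0)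
  show "- a + a = 0" by (rule z2_neg)
  show "a - b = a + - b" by (simp add: minus_z2_def)
  show "a * b * c = a * (b * c)" by (rule z2_mult_assoc)
  show "a * b = b * a" by (rule z2_mult_comm)
  show "1 * a = a" by (rule z2_mult_1)
  show "(a + b) * c = a * c + b * c" by (rule z2_distrib)
  show "(0::z2) \<noteq> 1" by (rule z2_01)
qed

end

definition ord2 :: "z2 \<Rightarrow> enat" where
  "ord2 a = (if a = 0 then \<infinity> else enat (LEAST k. \<not> (2::z2) ^ Suc k dvd a))"

definition ideal_gen :: "z2 set \<Rightarrow> z2 set" where
  "ideal_gen S = {a. \<exists>xs :: (z2 \<times> z2) list. set (map snd xs) \<subseteq> S \<and>
                       a = sum_list (map (\<lambda>(r, s). r * s) xs)}"

text \<open>A Z_2-lattice of rank n is Z_2^n (vectors in carrier_vec n) with the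
  bilinear form given by a symmetric Gram matrix G with nonzero determinant.\<close>
definition is_Z2_lattice :: "z2 mat \<Rightarrow> nat \<Rightarrow> bool" where
  "is_Z2_lattice G n \<longleftrightarrow> G \<in> carrier_mat n n \<and> transpose_mat G = G \<and> det G \<noteq> 0"

definition bform :: "z2 mat \<Rightarrow> z2 vec \<Rightarrow> z2 vec \<Rightarrow> z2" where
  "bform G x y = x \<bullet> (G *\<^sub>v y)"

definition qform :: "z2 mat \<Rightarrow> z2 vec \<Rightarrow> z2" where
  "qform G x = bform G x x"

definition scale_of :: "z2 mat \<Rightarrow> z2 vec set \<Rightarrow> z2 set" where
  "scale_of G M = ideal_gen {bform G x y | x y. x \<in> M \<and> y \<in> M}"

definition norm_of :: "z2 mat \<Rightarrow> z2 vec set \<Rightarrow> z2 set" where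
  "norm_of G M = ideal_gen {qform G x | x. x \<in> M}"

definition primitive :: "z2 mat \<Rightarrow> nat \<Rightarrow> bool" where
  "primitive G n \<longleftrightarrow> scale_of G (carrier_vec n) = UNIV"

definition SC2 :: "nat set" where "SC2 = {1, 3, 5, 7, 2, 6, 10, 14}"

definition least_u :: "z2 mat \<Rightarrow> nat \<Rightarrow> nat \<Rightarrow> nat" where
  "least_u G n s = (LEAST u. \<exists>x \<in> carrier_vec n. qform G x = of_nat s * 4 ^ u)"

definition nu2s :: "z2 mat \<Rightarrow> nat \<Rightarrow> nat \<Rightarrow> nat" where
  "nu2s G n s = the_enat (ord2 (of_nat s * 4 ^ least_u G n s))"

definition nu2 :: "z2 mat \<Rightarrow> nat \<Rightarrow> nat" where
  "nu2 G n = Max (nu2s G n ` SC2)"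

text \<open>A Jordan decomposition is encoded by a basis of L (the columns of an
  invertible matrix P over Z_2) together with block boundaries
  bs = [b_0 = 0 < b_1 < ... < b_k = n]; the j-th component (j = 1..k) is the
  Z_2-span of the basis vectors with indices in {b_(j-1)..<b_j}.\<close>

definition span_cols :: "z2 mat \<Rightarrow> nat \<Rightarrow> nat set \<Rightarrow> z2 vec set" where
  "span_cols P n A = {P *\<^sub>v v | v. v \<in> carrier_vec n \<and> (\<forall>i<n. i \<notin> A \<longrightarrow> v $ i = 0)}"

definition blk :: "nat list \<Rightarrow> nat \<Rightarrow> nat set" where
  "blk bs j = {bs ! (j - 1) ..< bs ! j}"

definition comp :: "z2 mat \<Rightarrow> nat \<Rightarrow> nat list \<Rightarrow> nat \<Rightarrow> z2 vec set" where
  "comp P n bs j = span_cols P n (blk bs j)"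

definition blk_gram :: "z2 mat \<Rightarrow> z2 mat \<Rightarrow> nat list \<Rightarrow> nat \<Rightarrow> z2 mat" where
  "blk_gram G P bs j = mat (bs ! j - bs ! (j - 1)) (bs ! j - bs ! (j - 1))
      (\<lambda>(p, q). bform G (col P (bs ! (j - 1) + p)) (col P (bs ! (j - 1) + q)))"

definition modular_blk :: "z2 mat \<Rightarrow> z2 mat \<Rightarrow> nat list \<Rightarrow> nat \<Rightarrow> bool" where
  "modular_blk G P bs j \<longleftrightarrow> (\<exists>(a::nat) U. U \<in> carrier_mat (bs ! j - bs ! (j - 1)) (bs ! j - bs ! (j - 1))
      \<and> det U dvd 1 \<and> blk_gram G P bs j = (2 ^ a) \<cdot>\<^sub>m U)"

definition jordan_decomp :: "z2 mat \<Rightarrow> nat \<Rightarrow> z2 mat \<Rightarrow> nat list \<Rightarrow> bool" where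
  "jordan_decomp G n P bs \<longleftrightarrow>
     P \<in> carrier_mat n n \<and> invertible_mat P \<and>
     length bs \<ge> 2 \<and> bs ! 0 = 0 \<and> last bs = n \<and>
     (\<forall>j. j + 1 < length bs \<longrightarrow> bs ! j < bs ! (Suc j)) \<and>
     (\<forall>i j p q. 1 \<le> i \<and> i < length bs \<and> 1 \<le> j \<and> j < length bs \<and> i \<noteq> j \<and>
        p \<in> blk bs i \<and> q \<in> blk bs j \<longrightarrow> bform G (col P p) (col P q) = 0) \<and>
     (\<forall>j. 1 \<le> j \<and> j < length bs \<longrightarrow> modular_blk G P bs j) \<and>
     scale_of G (comp P n bs 1) = UNIV \<and>
     (\<forall>j. 1 \<le> j \<and> j + 1 < length bs \<longrightarrow>
        scale_of G (comp P n bs (Suc j)) \<subset> scale_of G (comp P n bs j))"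

definition anisotropic :: "z2 mat \<Rightarrow> nat \<Rightarrow> z2 vec set \<Rightarrow> bool" where
  "anisotropic G n M \<longleftrightarrow> (\<forall>x \<in> M. qform G x = 0 \<longrightarrow> x = 0\<^sub>v n)"

text \<open>Type A (the number of components is k = length bs - 1; t ranges over 1..k).\<close>
definition type_A :: "z2 mat \<Rightarrow> nat \<Rightarrow> bool" where
  "type_A G n \<longleftrightarrow> primitive G n \<and> n \<ge> 4 \<and>
     (\<exists>P bs t. jordan_decomp G n P bs \<and> 1 \<le> t \<and> t < length bs \<and>
        bs ! (t - 1) = 3 \<and>
        anisotropic G n (span_cols P n {0 ..< bs ! (t - 1)}) \<and>
        norm_of G (comp P n bs t) \<subseteq> (\<lambda>c. 8 * c) ` scale_of G (comp P n bs (t - 1)))"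

end

theory Submission
  imports Defs
begin

lemma dig_plus: "digits (a + b) k = (digits a k + digits b k) mod 2 ^ k"
  by (simp add: plus_z2.rep_eq)
lemma dig_times: "digits (a * b) k = (digits a k * digits b k) mod 2 ^ k"
  by (simp add: times_z2.rep_eq)

lemma dig_of_nat: "digits (of_nat m :: z2) k = int m mod 2 ^ k"
proof (induction m)
  case 0 then show ?case by (simp add: zero_z2.rep_eq)
next
  case (Suc m)
  have "digits (of_nat (Suc m) :: z2) k = digits (1 + of_nat m :: z2) k" by simp
  also have "\<dots> = (1 mod 2^k + int m mod 2 ^ k) mod 2 ^ k"
    by (simp add: dig_plus Suc one_z2.rep_eq)
  also have "\<dots> = int (Suc m) mod 2 ^ k" by (cases "k = 0") (simp_all add: mod_add_right_eq)
  finally show ?case .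
qed

lemma two_pow_z2: "(2::z2) ^ k = of_nat (2 ^ k)" by simp

lemma dvd_dig0: assumes "(2::z2) ^ k dvd a" shows "digits a k = 0"
proof -
  obtain c where "a = 2 ^ k * c" using assms by (auto elim: dvdE)
  then show ?thesis by (simp only: dig_times two_pow_z2 dig_of_nat) simp
qed

lemma half_z2: assumes "digits a 1 = 0" shows "(2::z2) dvd a"
proof -
  define f where "f = (\<lambda>k. digits a (Suc k) div 2)"
  have ev: "even (digits a (Suc k))" for k
  proof -
    have "digits a (Suc k) mod 2 = digits a 1"
    proof (induction k)
      case 0 then show ?case using digits_mod[of a 1] by simp
    next
      case (Suc k)
      have h: "digits a (Suc k) = digits a (Suc (Suc k)) mod 2 ^ Suc k" using digits[of a] by blast
      have dv: "(2::int) dvd 2 ^ Suc k" by simp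
      have F: "digits a (Suc k) mod 2 = digits a (Suc (Suc k)) mod 2"
        unfolding h by (rule mod_mod_cancel[OF dv])
      show ?case using F Suc.IH by linarith
    qed
    then have "digits a (Suc k) mod 2 = 0" using assms by linarith
    then show ?thesis by (rule mod_0_imp_dvd)
  qed
  have comp: "\<forall>k. f k = f (Suc k) mod 2 ^ k"
  proof
    fix k
    have h: "digits a (Suc k) = digits a (Suc (Suc k)) mod 2 ^ Suc k" using digits[of a] by blast
    have "digits a (Suc (Suc k)) div 2 mod 2 ^ k = digits a (Suc (Suc k)) mod 2 ^ Suc k div 2"
      using div_exp_mod_exp_eq[of "digits a (Suc (Suc k))" 1 k] by (simp del: digits_mod)
    then show "f k = f (Suc k) mod 2 ^ k" unfolding f_def h[symmetric] by simp
  qed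
  define c where "c = Abs_z2 f"
  have fm: "f \<in> {f. \<forall>k. f k = f (Suc k) mod 2 ^ k}" using comp by blast
  have dc: "digits c k = f k" for k unfolding c_def Abs_z2_inverse[OF fm] ..
  have "a = 2 * c"
  proof (rule z2_eqI)
    fix k
    have "digits (2 * c) k = (int 2 mod 2 ^ k * f k) mod 2 ^ k"
      using dig_times[of 2 c k] dig_of_nat[of 2 k] dc by simp
    also have "\<dots> = (2 * f k) mod 2 ^ k" by (simp add: mod_mult_left_eq)
    also have "\<dots> = digits a (Suc k) mod 2 ^ k" unfolding f_def using ev[of k] by simp
    also have "\<dots> = digits a k"
    proof -
      have "digits a k = digits a (Suc k) mod 2 ^ k" using digits[of a] by blast
      then show ?thesis by (rule sym)
    qed
    finally show "digits a k = digits (2 * c) k" by simp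
  qed
  then show ?thesis by simp
qed

lemma dig1_cases: "digits a 1 = 0 \<or> digits a 1 = 1"
proof -
  have "digits a 1 = digits a 1 mod 2" using digits_mod[of a 1] by simp
  then show ?thesis by (metis mod2_eq_if)
qed

lemma odd_plus1: assumes "\<not> (2::z2) dvd g" shows "(2::z2) dvd (1 + g)"
proof -
  have "digits g 1 = 1" using dig1_cases[of g] half_z2[of g] assms by auto
  then have "digits (1 + g) 1 = 0" by (simp add: dig_plus one_z2.rep_eq)
  then show ?thesis by (rule half_z2)
qed

lemma nz_dig: assumes "(a::z2) \<noteq> 0" shows "\<exists>k. digits a k \<noteq> 0"
  using assms z2_eqI[of a 0] by (auto simp: zero_z2.rep_eq)

lemma hensel: fixes g h e :: z2 assumes "\<not> 2 dvd g" shows "\<exists>b. g*b + 4*h*b^2 + e = 0"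
proof -
  obtain w where w: "1 + g = 2*w" using odd_plus1[OF assms] by (auto elim: dvdE)
  define F where "F = (\<lambda>b::z2. g*b + 4*h*b^2 + e)"
  define r where "r = (\<lambda>k b. SOME \<rho>. F b = 2^k * \<rho>)"
  define bs where "bs = rec_nat (0::z2) (\<lambda>k b. b + 2^k * r k b)"
  have bs0: "bs 0 = 0" and bsS: "bs (Suc k) = bs k + 2^k * r k (bs k)" for k by (simp_all add: bs_def)
  have Fexp: "F (b + t) = F b + t*(1+g) - t + 8*h*b*t + 4*h*t^2" for b t
    by (simp add: F_def algebra_simps power2_eq_square)
  have inv: "\<exists>\<rho>. F (bs k) = 2^k*\<rho>" for k
  proof (induction k)
    case 0 then show ?case by (simp add: bs0 F_def)
  next
    case (Suc k)
    define b where "b = bs k"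
    define \<rho> where "\<rho> = r k b"
    have Fb: "F b = 2^k * \<rho>" unfolding \<rho>_def r_def b_def using Suc by (rule someI_ex)
    have "F (bs (Suc k)) = F (b + 2^k*\<rho>)" by (simp add: bsS b_def \<rho>_def)
    also have "\<dots> = 2^k*\<rho> + 2^k*\<rho>*(2*w) - 2^k*\<rho> + 8*h*b*(2^k*\<rho>) + 4*h*(2^k*\<rho>)^2"
      using Fexp[of b "2^k*\<rho>"] Fb w by simp
    also have "\<dots> = 2^(Suc k) * (\<rho>*w + 4*h*b*\<rho> + 2^(Suc k)*h*\<rho>^2)"
      by (simp add: algebra_simps power2_eq_square power_mult_distrib)
    finally show ?case by blast
  qed
  have stab: "digits (bs (Suc k)) k = digits (bs k) k" for k
  proof -
    have "digits (2^k * r k (bs k)) k = 0" by (rule dvd_dig0) simp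
    then show ?thesis by (simp add: bsS dig_plus digits_mod)
  qed
  have Fz: "digits (F (bs k)) k = 0" for k
    using inv[of k] dvd_dig0[of k "F (bs k)"] by auto
  define f where "f = (\<lambda>k. digits (bs k) k)"
  have comp: "\<forall>k. f k = f (Suc k) mod 2 ^ k"
  proof
    fix k
    have "digits (bs (Suc k)) k = digits (bs (Suc k)) (Suc k) mod 2^k" using digits[of "bs (Suc k)"] by blast
    then show "f k = f (Suc k) mod 2 ^ k" unfolding f_def using stab[of k] by simp
  qed
  define \<beta> where "\<beta> = Abs_z2 f"
  have fm: "f \<in> {f. \<forall>k. f k = f (Suc k) mod 2 ^ k}" using comp by blast
  have dbf: "digits \<beta> = f" unfolding \<beta>_def by (rule Abs_z2_inverse[OF fm])
  have db: "digits \<beta> k = digits (bs k) k" for k using dbf unfolding f_def by simp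
  have "F \<beta> = 0"
  proof (rule z2_eqI)
    fix k
    have "digits (F \<beta>) k = digits (F (bs k)) k"
      by (simp add: F_def dig_plus dig_times power2_eq_square db)
    then show "digits (F \<beta>) k = digits 0 k" using Fz[of k] by (simp add: zero_z2.rep_eq)
  qed
  then show ?thesis unfolding F_def by blast
qed

lemma ord2_dvd: assumes "ord2 a = enat m" shows "(2::z2)^m dvd a"
proof -
  have a0: "a \<noteq> 0" using assms by (auto simp: ord2_def)
  then have m: "m = (LEAST k. \<not> (2::z2) ^ Suc k dvd a)" using assms by (simp add: ord2_def)
  show ?thesis
  proof (cases m)
    case 0 then show ?thesis by simp
  next
    case (Suc m')
    then have "m' < (LEAST k. \<not> (2::z2) ^ Suc k dvd a)" using m by simp
    then have "\<not> \<not> (2::z2) ^ Suc m' dvd a" by (rule not_less_Least)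
    then show ?thesis using Suc by simp
  qed
qed

lemma ord2_odd: assumes "ord2 a = enat m" shows "\<exists>g. a = (2::z2)^m * g \<and> \<not> 2 dvd g"
proof -
  have a0: "a \<noteq> 0" using assms by (auto simp: ord2_def)
  then have m: "m = (LEAST k. \<not> (2::z2) ^ Suc k dvd a)" using assms by (simp add: ord2_def)
  obtain k where k: "digits a k \<noteq> 0" using nz_dig[OF a0] by blast
  have "k \<noteq> 0"
  proof
    assume "k = 0" then show False using k digits_0[of a] by simp
  qed
  then obtain k' where k': "k = Suc k'" by (cases k) auto
  have "\<not> (2::z2) ^ Suc k' dvd a" using k k' dvd_dig0 by blast
  then have nd: "\<not> (2::z2) ^ Suc m dvd a" unfolding m by (rule LeastI)
  obtain g where g: "a = 2^m * g" using ord2_dvd[OF assms] by (auto elim: dvdE)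
  have "\<not> 2 dvd g"
  proof
    assume "2 dvd g"
    then obtain g' where "g = 2 * g'" by (auto elim: dvdE)
    then have "a = 2^Suc m * g'" using g by simp
    then show False using nd by simp
  qed
  then show ?thesis using g by blast
qed

lemma ord2_le: assumes "\<not> (2::z2)^(Suc m) dvd a" shows "the_enat (ord2 a) \<le> m"
proof -
  have "a \<noteq> 0" using assms by auto
  then have "ord2 a = enat (LEAST k. \<not> (2::z2) ^ Suc k dvd a)" by (simp add: ord2_def)
  moreover have "(LEAST k. \<not> (2::z2) ^ Suc k dvd a) \<le> m" using assms by (rule Least_le)
  ultimately show ?thesis by simp
qed

lemma bform_sym: assumes "G \<in> carrier_mat n n" "transpose_mat G = G" "x \<in> carrier_vec n" "y \<in> carrier_vec n"
  shows "bform G y x = bform G x y"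
proof -
  have "y \<bullet> (G *\<^sub>v x) = (transpose_mat G *\<^sub>v y) \<bullet> x"
    using transpose_vec_mult_scalar[of G n n x y] assms by simp
  also have "\<dots> = x \<bullet> (G *\<^sub>v y)" using assms comm_scalar_prod[of "G *\<^sub>v y" n x] by simp
  finally show ?thesis by (simp add: bform_def)
qed

lemma mv_smult: assumes "(A::z2 mat) \<in> carrier_mat n n" "v \<in> carrier_vec n"
  shows "A *\<^sub>v (k \<cdot>\<^sub>v v) = k \<cdot>\<^sub>v (A *\<^sub>v v)"
  using assms by (intro eq_vecI) (auto simp: scalar_prod_smult_distrib[of _ n])

lemma qexp: assumes G: "G \<in> carrier_mat n n" "transpose_mat G = G" and x: "x \<in> carrier_vec n" and y: "y \<in> carrier_vec n"
  shows "qform G (x + b \<cdot>\<^sub>v y) = qform G x + 2*b*bform G x y + b^2 * qform G y"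
proof -
  have Gx: "G *\<^sub>v x \<in> carrier_vec n" and Gy: "G *\<^sub>v y \<in> carrier_vec n" using G x y by auto
  have by': "b \<cdot>\<^sub>v y \<in> carrier_vec n" using y by simp
  have "G *\<^sub>v (x + b \<cdot>\<^sub>v y) = G *\<^sub>v x + b \<cdot>\<^sub>v (G *\<^sub>v y)"
    using mult_add_distrib_mat_vec[OF G(1) x by'] mv_smult[OF G(1) y] by simp
  then have "qform G (x + b \<cdot>\<^sub>v y) = (x + b \<cdot>\<^sub>v y) \<bullet> (G *\<^sub>v x + b \<cdot>\<^sub>v (G *\<^sub>v y))"
    by (simp add: qform_def bform_def)
  also have "\<dots> = x \<bullet> (G *\<^sub>v x) + b * (x \<bullet> (G *\<^sub>v y)) + b * (y \<bullet> (G *\<^sub>v x)) + b * b * (y \<bullet> (G *\<^sub>v y))"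
    using x y Gx Gy
    by (simp add: add_scalar_prod_distrib[of _ n] scalar_prod_add_distrib[of _ n] algebra_simps)
  also have "\<dots> = qform G x + 2*b*bform G x y + b^2 * qform G y"
    using bform_sym[OF G x y] by (simp add: qform_def bform_def algebra_simps power2_eq_square)
  finally show ?thesis .
qed

lemma SC2_split: assumes "s \<in> SC2" shows "\<exists>os s'. s = 2^os * s' \<and> odd s' \<and> os \<le> 1"
proof (cases "odd s")
  case True then show ?thesis by (intro exI[of _ 0] exI[of _ s]) simp
next
  case False
  then have "s \<in> {2,6,10,14}" using assms by (auto simp: SC2_def)
  then show ?thesis by (intro exI[of _ 1] exI[of _ "s div 2"]) auto
qed

lemma nu2s_bound:
  assumes rep: "\<forall>c. (2::z2)^J dvd c \<longrightarrow> (\<exists>z\<in>carrier_vec n. qform G z = c)" and s: "s \<in> SC2"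
  shows "nu2s G n s \<le> J + 1"
proof -
  obtain os s' where ss: "s = 2^os * s'" "odd s'" "os \<le> 1" using SC2_split[OF s] by blast
  define u0 where "u0 = (J + 1 - os) div 2"
  have u0a: "J \<le> os + 2*u0" and u0b: "os + 2*u0 \<le> J + 1" using ss(3) unfolding u0_def by presburger+
  have cpow: "(of_nat s * 4 ^ u :: z2) = 2^(os + 2*u) * of_nat s'" for u
    by (simp add: ss(1) power_add power_mult)
  have "(of_nat s * 4 ^ u0 :: z2) = 2^J * (2^(os + 2*u0 - J) * of_nat s')"
    using cpow[of u0] u0a by (simp add: mult.assoc[symmetric] power_add[symmetric])
  then have "\<exists>z\<in>carrier_vec n. qform G z = of_nat s * 4 ^ u0" using rep by auto
  then have lu: "least_u G n s \<le> u0" unfolding least_u_def by (rule Least_le)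
  define M where "M = os + 2 * least_u G n s"
  have "\<not> (2::z2)^(Suc M) dvd (of_nat s * 4 ^ least_u G n s)"
  proof
    assume "(2::z2)^(Suc M) dvd (of_nat s * 4 ^ least_u G n s)"
    then have d0: "digits (of_nat s * 4 ^ least_u G n s :: z2) (Suc M) = 0" by (rule dvd_dig0)
    have eq: "(of_nat s * 4 ^ least_u G n s :: z2) = of_nat (s' * 2^M)"
      using cpow[of "least_u G n s"] unfolding M_def by (simp add: mult.commute)
    have "digits (of_nat (s' * 2^M) :: z2) (Suc M) = 0" using d0 eq by metis
    then have "int (s' * 2^M) mod 2^Suc M = 0" unfolding dig_of_nat .
    moreover have "int (s' * 2^M) mod 2^Suc M = (int s' mod 2) * 2^M"
      using mod_mult_mult2[of "int s'" "2^M" 2] by (simp add: mult.commute)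
    ultimately have "(int s' mod 2) * 2^M = 0" by simp
    then have "int s' mod 2 = 0" by simp
    then show False using ss(2) by presburger
  qed
  then have "the_enat (ord2 (of_nat s * 4 ^ least_u G n s :: z2)) \<le> M" by (rule ord2_le)
  then show ?thesis unfolding nu2s_def M_def using lu u0b by linarith
qed


theorem lemma2p9:
  fixes G :: "z2 mat" and n :: nat and x y :: "z2 vec"
  assumes "is_Z2_lattice G n" and "n \<ge> 4" and "primitive G n"
    and "type_A G n"
    and "x \<in> carrier_vec n" and "y \<in> carrier_vec n"
    and "ord2 (qform G x) = enat (nu2 G n)" and "ord2 (qform G y) = enat (nu2 G n)"
  shows "bform G x y \<in> (\<lambda>c. 2 ^ (nu2 G n - 2) * c) ` (UNIV :: z2 set)"
proof -
  from assms(1) have G: "G \<in> carrier_mat n n" and GT: "transpose_mat G = G"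
    by (auto simp: is_Z2_lattice_def)
  define \<nu> where "\<nu> = nu2 G n"
  define C where "C = bform G x y"
  show ?thesis
  proof (cases "C = 0")
    case True
    then have "bform G x y = 2 ^ (nu2 G n - 2) * 0" unfolding C_def by simp
    then show ?thesis by (rule image_eqI) simp
  next
    case False
    define j where "j = (LEAST k. \<not> (2::z2)^Suc k dvd C)"
    have oj: "ord2 C = enat j" using False by (simp add: ord2_def j_def)
    obtain g where g: "C = 2^j * g" "\<not> 2 dvd g" using ord2_odd[OF oj] by blast
    show ?thesis
    proof (cases "\<nu> - 2 \<le> j")
      case True
      have "j = (\<nu> - 2) + (j - (\<nu> - 2))" using True by simp
      then have "(2::z2)^j = 2^(\<nu> - 2) * 2^(j - (\<nu> - 2))" by (metis power_add)
      then have "bform G x y = 2^(nu2 G n - 2) * (2^(j - (\<nu> - 2)) * g)"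
        using g(1) unfolding C_def \<nu>_def by (simp add: mult.assoc)
      then show ?thesis by (rule image_eqI) simp
    next
      case False
      then have jl: "j + 3 \<le> \<nu>" by arith
      obtain a where a: "qform G x = 2^\<nu> * a" using ord2_dvd[OF assms(7)] unfolding \<nu>_def by (auto elim: dvdE)
      obtain d where d: "qform G y = 2^\<nu> * d" using ord2_dvd[OF assms(8)] unfolding \<nu>_def by (auto elim: dvdE)
      define m where "m = \<nu> - (j+3)"
      have e: "\<nu> = (j+1) + 2 + m" using jl unfolding m_def by arith
      have p\<nu>: "(2::z2)^\<nu> = 2^(j+1) * 4 * 2^m"
      proof -
        have "(2::z2)^\<nu> = 2^((j+1) + 2 + m)" using e by simp
        also have "\<dots> = 2^(j+1) * 4 * 2^m" by (simp add: power_add)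
        finally show ?thesis .
      qed
      have rep: "\<forall>c. (2::z2)^(j+1) dvd c \<longrightarrow> (\<exists>z\<in>carrier_vec n. qform G z = c)"
      proof (intro allI impI)
        fix c :: z2 assume "(2::z2)^(j+1) dvd c"
        then obtain c' where c': "c = 2^(j+1) * c'" by (auto elim: dvdE)
        obtain b where b: "g*b + 4*(2^m*d)*b^2 + (4*2^m*a - c') = 0" using hensel[OF g(2)] by blast
        have z: "x + b \<cdot>\<^sub>v y \<in> carrier_vec n" using assms(5,6) by simp
        have "qform G (x + b \<cdot>\<^sub>v y) = qform G x + 2*b*C + b^2*qform G y"
          using qexp[OF G GT assms(5) assms(6)] unfolding C_def by simp
        also have "\<dots> = 2^(j+1) * (g*b + 4*(2^m*d)*b^2 + (4*2^m*a - c')) + c"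
          unfolding a d g(1) p\<nu> c' by (simp add: algebra_simps)
        also have "\<dots> = c" using b by simp
        finally show "\<exists>z\<in>carrier_vec n. qform G z = c" using z by blast
      qed
      have "\<forall>s\<in>SC2. nu2s G n s \<le> j+2" using nu2s_bound[OF rep] by simp
      then have "nu2 G n \<le> j+2" unfolding nu2_def by (subst Max_le_iff) (auto simp: SC2_def)
      then show ?thesis using jl \<nu>_def by simp
    qed
  qed
qed

end
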